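(* Let $f\in\omega^{\subset\omega}$, let $\Xi$ be a family of completions of $f$ which blocks at width $n_\Xi$, and let $U$ be a $2n_\Xi$-branching set of extensions of $f$. Then there is a $2$-branching set of extensions of $f$, $U^*\subseteq U\cap\Xi$, such that for every $g\in U^*$, $\Xi\upharpoonright g$ blocks at width $n_\Xi$ (as a family of completions of $g$).
   Context: $\omega^{\subset\omega}$ is the set of partial functions from $\omega$ to $\omega$ with finite domain. For $f\in\omega^{\subset\omega}$, an $n$-branching set of extensions of $f$ of length $k$ is defined by induction on $k$: of length $1$, it is a set $U$ of $n$ functions such that for some fixed $x\notin\operatorname{dom}(f)$ each $g\in U$ satisfies $f\subseteq g$ and $\operatorname{dom}(g)=\operatorname{dom}(f)\cup\{x\}$; if $U_0$ is an $n$-branching set of extensions of $f$ of length $k$ and for each $g\in U_0$, $U_g$ is an $n$-branching set of extensions of $g$ of length $1$, then $\bigcup_{g\in U_0}U_g$ is an $n$-branching set of extensions of $f$ of length $k+1$. An $n$-branching set of extensions is one of some length $k\geq1$. A family of completions of $f$ is a set $\Xi\subseteq\omega^{\subset\omega}$ such that every $g\in\Xi$ satisfies $f\subseteq g$, and if $g\in\Xi$ and $f\subseteq h\subseteq g$ then $h\in\Xi$. $\Xi$ blocks at width $n$ if every $n$-branching set of extensions of $f$ has nonempty intersection with $\Xi$. For $g\in\Xi$, $\Xi\upharpoonright g=\{h\in\Xi: g\subseteq h\}$. *)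

theory Defs
  imports Main
begin

definition finpfun :: "(nat \<rightharpoonup> nat) set" where
  "finpfun = {f. finite (dom f)}"

inductive branching :: "nat \<Rightarrow> (nat \<rightharpoonup> nat) \<Rightarrow> nat \<Rightarrow> (nat \<rightharpoonup> nat) set \<Rightarrow> bool"
  for n :: nat where
  base: "\<lbrakk> x \<notin> dom f; finite U; card U = n;
           \<forall>g\<in>U. f \<subseteq>\<^sub>m g \<and> dom g = insert x (dom f) \<rbrakk>
         \<Longrightarrow> branching n f 1 U"
| step: "\<lbrakk> branching n f k U0; \<forall>g\<in>U0. branching n g 1 (V g) \<rbrakk>
         \<Longrightarrow> branching n f (Suc k) (\<Union>g\<in>U0. V g)"

definition is_branching :: "nat \<Rightarrow> (nat \<rightharpoonup> nat) \<Rightarrow> (nat \<rightharpoonup> nat) set \<Rightarrow> bool" where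
  "is_branching n f U \<longleftrightarrow> (\<exists>k\<ge>1. branching n f k U)"

definition completions :: "(nat \<rightharpoonup> nat) \<Rightarrow> (nat \<rightharpoonup> nat) set \<Rightarrow> bool" where
  "completions f Xi \<longleftrightarrow> Xi \<subseteq> finpfun \<and> (\<forall>g\<in>Xi. f \<subseteq>\<^sub>m g) \<and>
     (\<forall>g\<in>Xi. \<forall>h. f \<subseteq>\<^sub>m h \<and> h \<subseteq>\<^sub>m g \<longrightarrow> h \<in> Xi)"

definition blocks :: "(nat \<rightharpoonup> nat) \<Rightarrow> (nat \<rightharpoonup> nat) set \<Rightarrow> nat \<Rightarrow> bool" where
  "blocks f Xi n \<longleftrightarrow> (\<forall>U. is_branching n f U \<longrightarrow> U \<inter> Xi \<noteq> {})"

definition restr :: "(nat \<rightharpoonup> nat) set \<Rightarrow> (nat \<rightharpoonup> nat) \<Rightarrow> (nat \<rightharpoonup> nat) set" where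
  "restr Xi g = {h\<in>Xi. g \<subseteq>\<^sub>m h}"

end

theory Submission
  imports Defs
begin

lemma br_ge1: "branching n f k U \<Longrightarrow> k \<ge> 1"
  by (induction rule: branching.induct) auto

lemma br_is: "branching n f k U \<Longrightarrow> is_branching n f U"
  unfolding is_branching_def using br_ge1 by blast

lemma br_ext: "branching n f k U \<Longrightarrow> \<forall>v\<in>U. f \<subseteq>\<^sub>m v"
  by (induction rule: branching.induct) (auto intro: map_le_trans)

lemma br1: assumes "branching n f 1 W"
  shows "\<exists>x. x \<notin> dom f \<and> finite W \<and> card W = n \<and> (\<forall>g\<in>W. f \<subseteq>\<^sub>m g \<and> dom g = insert x (dom f))"
  using assms
proof (cases rule: branching.cases)
  case (step k U0 V)
  then show ?thesis using br_ge1 by fastforce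
qed auto

lemma br_fin: "branching n f k U \<Longrightarrow> finite (dom f) \<Longrightarrow> \<forall>v\<in>U. finite (dom v)"
proof (induction rule: branching.induct)
  case (base x f U)
  then show ?case by auto
next
  case (step f k U0 V)
  then show ?case by (metis UN_E br1 finite_insert)
qed

lemma ex_br1: assumes "finite (dom g)" shows "\<exists>V. branching m g 1 V"
proof -
  obtain x where x: "x \<notin> dom g"
    using assms infinite_UNIV_nat by (metis UNIV_I finite_subset subsetI)
  let ?V = "(\<lambda>i. g(x \<mapsto> i)) ` {..<m}"
  have inj: "inj_on (\<lambda>i. g(x \<mapsto> i)) {..<m}"
    unfolding inj_on_def by (metis fun_upd_same option.inject)
  have "card ?V = m" using card_image[OF inj] by simp
  moreover have "\<forall>h\<in>?V. g \<subseteq>\<^sub>m h \<and> dom h = insert x (dom g)"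
    using x by (auto simp: map_le_def)
  ultimately show ?thesis using branching.base[OF x, of ?V m] by blast
qed

lemma pad:
  assumes "branching n g k V" "finite (dom g)" "\<forall>v\<in>V. \<forall>w. v \<subseteq>\<^sub>m w \<longrightarrow> w \<notin> Xi"
  shows "\<exists>V'. branching n g (Suc k) V' \<and> (\<forall>v\<in>V'. \<forall>w. v \<subseteq>\<^sub>m w \<longrightarrow> w \<notin> Xi)"
proof -
  have fv: "\<forall>v\<in>V. finite (dom v)" using br_fin[OF assms(1,2)] .
  have "\<forall>v\<in>V. \<exists>S. branching n v 1 S"
  proof
    fix v assume "v \<in> V"
    then show "\<exists>S. branching n v 1 S" using fv ex_br1 by blast
  qed
  note ex = this
  obtain S where S: "\<forall>v\<in>V. branching n v 1 (S v)" using bchoice[OF ex] by blast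
  have "branching n g (Suc k) (\<Union>v\<in>V. S v)" by (rule branching.step[OF assms(1) S])
  moreover have "\<forall>u\<in>(\<Union>v\<in>V. S v). \<forall>w. u \<subseteq>\<^sub>m w \<longrightarrow> w \<notin> Xi"
  proof (intro ballI allI impI)
    fix u w assume u: "u \<in> (\<Union>v\<in>V. S v)" and uw: "u \<subseteq>\<^sub>m w"
    then obtain v where v: "v \<in> V" "u \<in> S v" by blast
    have "v \<subseteq>\<^sub>m u" using br_ext[of n v 1 "S v"] S v by blast
    then have "v \<subseteq>\<^sub>m w" using uw by (rule map_le_trans)
    then show "w \<notin> Xi" using assms(3) v(1) by blast
  qed
  ultimately show ?thesis by blast
qed

lemma pad_iter:
  assumes "branching n g k V" "finite (dom g)" "\<forall>v\<in>V. \<forall>w. v \<subseteq>\<^sub>m w \<longrightarrow> w \<notin> Xi"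
  shows "k \<le> K \<Longrightarrow> \<exists>V'. branching n g K V' \<and> (\<forall>v\<in>V'. \<forall>w. v \<subseteq>\<^sub>m w \<longrightarrow> w \<notin> Xi)"
proof (induction K)
  case 0
  then show ?case using br_ge1[OF assms(1)] by simp
next
  case (Suc K)
  show ?case
  proof (cases "k = Suc K")
    case True
    then show ?thesis using assms by blast
  next
    case False
    then have "k \<le> K" using Suc by simp
    then obtain V' where "branching n g K V'" "\<forall>v\<in>V'. \<forall>w. v \<subseteq>\<^sub>m w \<longrightarrow> w \<notin> Xi"
      using Suc by blast
    then show ?thesis using pad assms(2) by blast
  qed
qed

lemma uniq:
  assumes "branching n f 1 W" "h1 \<in> W" "h2 \<in> W" "h1 \<subseteq>\<^sub>m g" "h2 \<subseteq>\<^sub>m g"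
  shows "h1 = h2"
proof -
  obtain x where "\<forall>g\<in>W. f \<subseteq>\<^sub>m g \<and> dom g = insert x (dom f)" using br1[OF assms(1)] by blast
  then have d: "dom h1 = dom h2" using assms by auto
  show ?thesis
  proof (rule ext)
    fix y
    show "h1 y = h2 y"
    proof (cases "y \<in> dom h1")
      case True
      then show ?thesis using d assms(4,5) unfolding map_le_def by metis
    next
      case False
      then show ?thesis using d by (metis domIff)
    qed
  qed
qed

lemma prepend:
  "branching n f 1 W \<Longrightarrow> \<forall>h\<in>W. branching n h (Suc k) (V h) \<Longrightarrow>
   branching n f (Suc (Suc k)) (\<Union>h\<in>W. V h)"
proof (induction k arbitrary: V)
  case 0
  have "branching n f (Suc 1) (\<Union>h\<in>W. V h)"
    by (rule branching.step[OF 0(1)]) (use 0(2) in simp)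
  then show ?case by simp
next
  case (Suc k)
  have "\<forall>h\<in>W. \<exists>A. \<exists>B. branching n h (Suc k) A \<and> (\<forall>g\<in>A. branching n g 1 (B g)) \<and> V h = (\<Union>g\<in>A. B g)"
  proof
    fix h assume "h \<in> W"
    then have "branching n h (Suc (Suc k)) (V h)" using Suc.prems(2) by blast
    then show "\<exists>A. \<exists>B. branching n h (Suc k) A \<and> (\<forall>g\<in>A. branching n g 1 (B g)) \<and> V h = (\<Union>g\<in>A. B g)"
    proof (cases rule: branching.cases)
      case base
      then show ?thesis by simp
    next
      case step
      then show ?thesis by blast
    qed
  qed
  note ex1 = this
  obtain A where "\<forall>h\<in>W. \<exists>B. branching n h (Suc k) (A h) \<and> (\<forall>g\<in>A h. branching n g 1 (B g)) \<and> V h = (\<Union>g\<in>A h. B g)"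
    using bchoice[OF ex1] by blast
  note ex2 = this
  obtain B where AB: "\<forall>h\<in>W. branching n h (Suc k) (A h) \<and> (\<forall>g\<in>A h. branching n g 1 (B h g)) \<and> V h = (\<Union>g\<in>A h. B h g)"
    using bchoice[OF ex2] by blast
  have Ak: "\<forall>h\<in>W. branching n h (Suc k) (A h)" using AB by blast
  have IH: "branching n f (Suc (Suc k)) (\<Union>h\<in>W. A h)" using Suc.IH[OF Suc.prems(1) Ak] .
  define C where "C g = B (THE h. h \<in> W \<and> g \<in> A h) g" for g
  have the: "(THE h. h \<in> W \<and> g \<in> A h) = h" if hg: "h \<in> W" "g \<in> A h" for h g
  proof (rule the_equality)
    show "h \<in> W \<and> g \<in> A h" using hg by simp
  next
    fix h' assume h': "h' \<in> W \<and> g \<in> A h'"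
    have "h \<subseteq>\<^sub>m g" using br_ext[of n h "Suc k" "A h"] Ak hg by blast
    moreover have "h' \<subseteq>\<^sub>m g" using br_ext[of n h' "Suc k" "A h'"] Ak h' by blast
    ultimately show "h' = h" using uniq[OF Suc.prems(1)] h' hg(1) by blast
  qed
  have Cg: "C g = B h g" if "h \<in> W" "g \<in> A h" for h g
    unfolding C_def using the[OF that] by simp
  have stepC: "\<forall>g\<in>(\<Union>h\<in>W. A h). branching n g 1 (C g)"
  proof
    fix g assume "g \<in> (\<Union>h\<in>W. A h)"
    then obtain h where h: "h \<in> W" "g \<in> A h" by blast
    have "branching n g 1 (B h g)" using AB h by blast
    then show "branching n g 1 (C g)" using Cg[OF h] by simp
  qed
  have "branching n f (Suc (Suc (Suc k))) (\<Union>g\<in>(\<Union>h\<in>W. A h). C g)"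
    by (rule branching.step[OF IH stepC])
  moreover have "(\<Union>g\<in>(\<Union>h\<in>W. A h). C g) = (\<Union>h\<in>W. V h)"
  proof
    show "(\<Union>g\<in>(\<Union>h\<in>W. A h). C g) \<subseteq> (\<Union>h\<in>W. V h)"
    proof
      fix u assume "u \<in> (\<Union>g\<in>(\<Union>h\<in>W. A h). C g)"
      then obtain h g where h: "h \<in> W" "g \<in> A h" "u \<in> C g" by blast
      then have "u \<in> B h g" using Cg[OF h(1,2)] by simp
      then show "u \<in> (\<Union>h\<in>W. V h)" using AB h by blast
    qed
  next
    show "(\<Union>h\<in>W. V h) \<subseteq> (\<Union>g\<in>(\<Union>h\<in>W. A h). C g)"
    proof
      fix u assume "u \<in> (\<Union>h\<in>W. V h)"
      then obtain h where h: "h \<in> W" "u \<in> V h" by blast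
      then obtain g where g: "g \<in> A h" "u \<in> B h g" using AB by blast
      then have "u \<in> C g" using Cg[OF h(1) g(1)] by simp
      then show "u \<in> (\<Union>g\<in>(\<Union>h\<in>W. A h). C g)" using h(1) g(1) by blast
    qed
  qed
  ultimately show ?case by simp
qed

lemma restr_restr: "g \<subseteq>\<^sub>m h \<Longrightarrow> restr (restr Xi g) h = restr Xi h"
  unfolding restr_def using map_le_trans[of g h] by blast

lemma compl_restr: "completions f Xi \<Longrightarrow> g \<in> Xi \<Longrightarrow> completions g (restr Xi g)"
proof -
  assume c: "completions f Xi" and g: "g \<in> Xi"
  have fg: "f \<subseteq>\<^sub>m g" using c g unfolding completions_def by blast
  show ?thesis unfolding completions_def restr_def
  proof (intro conjI ballI allI impI)
    show "{h \<in> Xi. g \<subseteq>\<^sub>m h} \<subseteq> finpfun" using c unfolding completions_def by blast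
  next
    fix h assume "h \<in> {h \<in> Xi. g \<subseteq>\<^sub>m h}"
    then show "g \<subseteq>\<^sub>m h" by blast
  next
    fix h h' assume h: "h \<in> {h \<in> Xi. g \<subseteq>\<^sub>m h}" and h': "g \<subseteq>\<^sub>m h' \<and> h' \<subseteq>\<^sub>m h"
    have "f \<subseteq>\<^sub>m h'" using map_le_trans[OF fg] h' by blast
    then have "h' \<in> Xi" using c h h' unfolding completions_def by blast
    then show "h' \<in> {h \<in> Xi. g \<subseteq>\<^sub>m h}" using h' by blast
  qed
qed

lemma good_in:
  assumes "completions f Xi" "f \<subseteq>\<^sub>m h" "finite (dom h)" "blocks h (restr Xi h) n"
  shows "h \<in> Xi"
proof -
  obtain V where "branching n h 1 V" using ex_br1 assms(3) by blast
  then have "is_branching n h V" by (rule br_is)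
  then obtain w where "w \<in> Xi" "h \<subseteq>\<^sub>m w" using assms(4) unfolding blocks_def restr_def by blast
  then show ?thesis using assms(1,2) unfolding completions_def by blast
qed

lemma key:
  assumes fin: "finite (dom f)" and comp: "completions f Xi" and bl: "blocks f Xi n"
    and W: "branching (2*n) f 1 W"
  shows "\<exists>h1 h2. h1 \<noteq> h2 \<and> h1 \<in> W \<and> h2 \<in> W \<and> blocks h1 (restr Xi h1) n \<and> blocks h2 (restr Xi h2) n"
proof (rule ccontr)
  assume neg: "\<not> ?thesis"
  have n1: "n \<ge> 1"
  proof (rule ccontr)
    assume "\<not> n \<ge> 1"
    then have n0: "n = 0" by simp
    obtain V where V: "branching 0 f 1 V" using ex_br1 fin by blast
    then have "V = {}" using br1[OF V] by auto
    have "is_branching n f V" using V n0 by (simp add: br_is)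
    then show False using bl \<open>V = {}\<close> unfolding blocks_def by blast
  qed
  obtain x where x: "x \<notin> dom f" "finite W" "card W = 2*n" "\<forall>g\<in>W. f \<subseteq>\<^sub>m g \<and> dom g = insert x (dom f)"
    using br1[OF W] by blast
  define G where "G = {h\<in>W. blocks h (restr Xi h) n}"
  have fG: "finite G" using x(2) G_def by simp
  have "\<forall>a\<in>G. \<forall>b\<in>G. a = b"
  proof (intro ballI)
    fix a b assume ab: "a \<in> G" "b \<in> G"
    show "a = b"
    proof (rule ccontr)
      assume "a \<noteq> b"
      then show False using neg ab unfolding G_def by blast
    qed
  qed
  then have cG: "card G \<le> 1" using card_le_Suc0_iff_eq[OF fG] by simp
  have "card (W - G) = card W - card G" using card_Diff_subset[OF fG] G_def by auto
  then have "n \<le> card (W - G)" using cG x(3) n1 by simp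
  then obtain B where B: "B \<subseteq> W - G" "card B = n" by (meson obtain_subset_with_card_n)
  have fB: "finite B" using finite_subset[OF B(1)] x(2) by simp
  have Bx: "\<forall>g\<in>B. f \<subseteq>\<^sub>m g \<and> dom g = insert x (dom f)" using B(1) x(4) by (meson DiffD1 subsetD)
  have WB: "branching n f 1 B"
    by (rule branching.base[OF x(1) fB B(2) Bx])
  have "\<forall>h\<in>B. \<exists>k V. branching n h k V \<and> (\<forall>v\<in>V. \<forall>w. v \<subseteq>\<^sub>m w \<longrightarrow> w \<notin> Xi)"
  proof
    fix h assume h: "h \<in> B"
    then have "\<not> blocks h (restr Xi h) n" "f \<subseteq>\<^sub>m h" using B G_def x(4) by auto
    then obtain k V where kV: "branching n h k V" "V \<inter> restr Xi h = {}"
      unfolding blocks_def is_branching_def by blast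
    have "\<forall>v\<in>V. \<forall>w. v \<subseteq>\<^sub>m w \<longrightarrow> w \<notin> Xi"
    proof (intro ballI allI impI)
      fix v w assume v: "v \<in> V" "v \<subseteq>\<^sub>m w"
      show "w \<notin> Xi"
      proof
        assume "w \<in> Xi"
        have hv: "h \<subseteq>\<^sub>m v" using br_ext[OF kV(1)] v by blast
        then have "f \<subseteq>\<^sub>m v" using \<open>f \<subseteq>\<^sub>m h\<close> map_le_trans by blast
        then have "v \<in> Xi" using comp \<open>w \<in> Xi\<close> v(2) unfolding completions_def by blast
        then show False using kV(2) v hv unfolding restr_def by blast
      qed
    qed
    then show "\<exists>k V. branching n h k V \<and> (\<forall>v\<in>V. \<forall>w. v \<subseteq>\<^sub>m w \<longrightarrow> w \<notin> Xi)" using kV by blast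
  qed
  note ex1 = this
  obtain kk where "\<forall>h\<in>B. \<exists>V. branching n h (kk h) V \<and> (\<forall>v\<in>V. \<forall>w. v \<subseteq>\<^sub>m w \<longrightarrow> w \<notin> Xi)"
    using bchoice[OF ex1] by blast
  note ex2 = this
  obtain VV where kV: "\<forall>h\<in>B. branching n h (kk h) (VV h) \<and> (\<forall>v\<in>VV h. \<forall>w. v \<subseteq>\<^sub>m w \<longrightarrow> w \<notin> Xi)"
    using bchoice[OF ex2] by blast
  define K where "K = Max (kk ` B)"
  have Bne: "B \<noteq> {}" using B(2) n1 by auto
  have le: "kk h \<le> K" if "h \<in> B" for h using that fB K_def by simp
  have "\<forall>h\<in>B. \<exists>V'. branching n h K V' \<and> (\<forall>v\<in>V'. \<forall>w. v \<subseteq>\<^sub>m w \<longrightarrow> w \<notin> Xi)"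
  proof
    fix h assume h: "h \<in> B"
    have "finite (dom h)" using h B x(4) fin by auto
    then show "\<exists>V'. branching n h K V' \<and> (\<forall>v\<in>V'. \<forall>w. v \<subseteq>\<^sub>m w \<longrightarrow> w \<notin> Xi)"
      using pad_iter[of n h "kk h" "VV h" Xi K] kV h le by blast
  qed
  note ex3 = this
  obtain V' where V': "\<forall>h\<in>B. branching n h K (V' h) \<and> (\<forall>v\<in>V' h. \<forall>w. v \<subseteq>\<^sub>m w \<longrightarrow> w \<notin> Xi)"
    using bchoice[OF ex3] by blast
  obtain h0 where h0: "h0 \<in> B" using Bne by blast
  have "1 \<le> kk h0" using br_ge1 kV h0 by blast
  then have "K \<ge> 1" using le[OF h0] by linarith
  then obtain K0 where K0: "K = Suc K0" by (cases K) auto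
  have V'b: "\<forall>h\<in>B. branching n h (Suc K0) (V' h)"
    using V' unfolding K0 by blast
  have "branching n f (Suc (Suc K0)) (\<Union>h\<in>B. V' h)"
    by (rule prepend[OF WB V'b])
  then have "is_branching n f (\<Union>h\<in>B. V' h)" by (rule br_is)
  then obtain w where "w \<in> (\<Union>h\<in>B. V' h)" "w \<in> Xi" using bl unfolding blocks_def by blast
  then obtain h where "h \<in> B" "w \<in> V' h" by blast
  then have av: "\<forall>w'. w \<subseteq>\<^sub>m w' \<longrightarrow> w' \<notin> Xi" using V' by blast
  have "w \<subseteq>\<^sub>m w" by (rule map_le_refl)
  then show False using av \<open>w \<in> Xi\<close> by blast
qed

lemma pair_br:
  assumes "branching m g 1 W" "h1 \<in> W" "h2 \<in> W" "h1 \<noteq> h2"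
  shows "branching 2 g 1 {h1, h2}"
proof -
  obtain x where x: "x \<notin> dom g" "\<forall>u\<in>W. g \<subseteq>\<^sub>m u \<and> dom u = insert x (dom g)"
    using br1[OF assms(1)] by blast
  show ?thesis by (rule branching.base[OF x(1)]) (use assms x in auto)
qed

lemma main:
  "branching m f k U \<Longrightarrow> m = 2*n \<Longrightarrow> finite (dom f) \<Longrightarrow> completions f Xi \<Longrightarrow> blocks f Xi n \<Longrightarrow>
   \<exists>Us. branching 2 f k Us \<and> Us \<subseteq> U \<inter> Xi \<and> (\<forall>g\<in>Us. blocks g (restr Xi g) n)"
proof (induction arbitrary: Xi rule: branching.induct)
  case (base x f U)
  have W: "branching m f 1 U" using branching.base[OF base(1-4)] .
  obtain h1 h2 where h: "h1 \<noteq> h2" "h1 \<in> U" "h2 \<in> U" "blocks h1 (restr Xi h1) n" "blocks h2 (restr Xi h2) n"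
    using key[OF base(6,7,8)] W base(5) by blast
  have "h1 \<in> Xi" "h2 \<in> Xi" using good_in[OF base(7)] h base(4,6) by auto
  then show ?case using pair_br[OF W h(2,3,1)] h by blast
next
  case (step f k U0 V)
  obtain Us0 where U0: "branching 2 f k Us0" "Us0 \<subseteq> U0 \<inter> Xi" "\<forall>g\<in>Us0. blocks g (restr Xi g) n"
    using step.IH step.prems by blast
  have "\<forall>g\<in>Us0. \<exists>h1 h2. h1 \<noteq> h2 \<and> h1 \<in> V g \<and> h2 \<in> V g \<and> h1 \<in> Xi \<and> h2 \<in> Xi \<and>
          blocks h1 (restr Xi h1) n \<and> blocks h2 (restr Xi h2) n"
  proof
    fix g assume g: "g \<in> Us0"
    have gX: "g \<in> Xi" using g U0 by blast
    have fg: "finite (dom g)" using gX step.prems(3) unfolding completions_def finpfun_def by blast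
    have cg: "completions g (restr Xi g)" using compl_restr[OF step.prems(3) gX] .
    have Vg: "branching (2*n) g 1 (V g)" using step(3) g U0 step.prems(1) by blast
    obtain h1 h2 where h: "h1 \<noteq> h2" "h1 \<in> V g" "h2 \<in> V g"
      "blocks h1 (restr (restr Xi g) h1) n" "blocks h2 (restr (restr Xi g) h2) n"
      using key[OF fg cg _ Vg] U0(3) g by blast
    have ext: "g \<subseteq>\<^sub>m h1" "g \<subseteq>\<^sub>m h2" using br_ext[OF Vg] h by auto
    have fh: "finite (dom h1)" "finite (dom h2)" using br_fin[OF Vg fg] h by auto
    have "h1 \<in> restr Xi g" "h2 \<in> restr Xi g" using good_in[OF cg] ext fh h(4,5) by auto
    then have X: "h1 \<in> Xi" "h2 \<in> Xi" unfolding restr_def by auto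
    have b1: "blocks h1 (restr Xi h1) n" using h(4) restr_restr[OF ext(1)] by simp
    have b2: "blocks h2 (restr Xi h2) n" using h(5) restr_restr[OF ext(2)] by simp
    show "\<exists>h1 h2. h1 \<noteq> h2 \<and> h1 \<in> V g \<and> h2 \<in> V g \<and> h1 \<in> Xi \<and> h2 \<in> Xi \<and>
          blocks h1 (restr Xi h1) n \<and> blocks h2 (restr Xi h2) n"
      by (rule exI[of _ h1], rule exI[of _ h2]) (use h X b1 b2 in simp)
  qed
  note ex4 = this
  obtain H1 where H0: "\<forall>g\<in>Us0. \<exists>h2. H1 g \<noteq> h2 \<and> H1 g \<in> V g \<and> h2 \<in> V g \<and> H1 g \<in> Xi \<and> h2 \<in> Xi \<and>
          blocks (H1 g) (restr Xi (H1 g)) n \<and> blocks h2 (restr Xi h2) n"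
    using bchoice[OF ex4] by blast
  then obtain H2 where H: "\<forall>g\<in>Us0. H1 g \<noteq> H2 g \<and> H1 g \<in> V g \<and> H2 g \<in> V g \<and> H1 g \<in> Xi \<and> H2 g \<in> Xi \<and>
          blocks (H1 g) (restr Xi (H1 g)) n \<and> blocks (H2 g) (restr Xi (H2 g)) n"
    using bchoice[OF H0] by blast
  have "branching 2 f (Suc k) (\<Union>g\<in>Us0. {H1 g, H2 g})"
    by (rule branching.step[OF U0(1)]) (use H pair_br step(3) U0(2) in blast)
  moreover have "(\<Union>g\<in>Us0. {H1 g, H2 g}) \<subseteq> (\<Union>g\<in>U0. V g) \<inter> Xi" using H U0(2) by blast
  moreover have "\<forall>u\<in>(\<Union>g\<in>Us0. {H1 g, H2 g}). blocks u (restr Xi u) n" using H by blast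
  ultimately show ?case by blast
qed

theorem mainTheorem9:
  fixes f :: "nat \<rightharpoonup> nat" and Xi U :: "(nat \<rightharpoonup> nat) set" and n :: nat
  assumes "f \<in> finpfun"
    and "completions f Xi"
    and "blocks f Xi n"
    and "is_branching (2 * n) f U"
  shows "\<exists>Ustar. is_branching 2 f Ustar \<and> Ustar \<subseteq> U \<inter> Xi \<and>
           (\<forall>g\<in>Ustar. completions g (restr Xi g) \<and> blocks g (restr Xi g) n)"
proof -
  obtain k where k: "branching (2*n) f k U" using assms(4) unfolding is_branching_def by blast
  have fin: "finite (dom f)" using assms(1) unfolding finpfun_def by simp
  obtain Us where Us: "branching 2 f k Us" "Us \<subseteq> U \<inter> Xi" "\<forall>g\<in>Us. blocks g (restr Xi g) n"
    using main[OF k refl fin assms(2,3)] by blast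
  have "is_branching 2 f Us" using Us(1) by (rule br_is)
  then show ?thesis using Us compl_restr[OF assms(2)] by blast
qed

end
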